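(* Let $\alpha>0$. Consider the model $Y_i=f(x_i)+V_i^{1/2}\xi_i$, $i=1,\dots,n$, $x_i=i/n$, with $\xi_1,\dots,\xi_n\overset{iid}{\sim}N(0,1)$. For every $\eta\in(0,1)$ there exists $c_\eta>0$ not depending on $n$ such that for all $0<c<c_\eta$ and all $n$ sufficiently large depending only on $\eta$, $$\inf_\varphi\left\{\sup_{f\in\mathcal{H}_\alpha,\,V\in\Sigma_0}P_{f,V}\{\varphi=1\}+\sup_{f\in\mathcal{H}_\alpha,\,V\in\Sigma_1(cn^{-1/4})}P_{f,V}\{\varphi=0\}\right\}\ge1-\eta,$$ where the infimum is over all tests $\varphi$ (measurable functions of $(Y_1,\dots,Y_n)$ into $\{0,1\}$).
   Context: $\mathcal{H}_\alpha=\mathcal{H}_\alpha(M)$: functions $g:[0,1]\to\mathbb{R}$ with $|g^{(\lfloor\alpha\rfloor)}(x)-g^{(\lfloor\alpha\rfloor)}(y)|\le M|x-y|^{\alpha-\lfloor\alpha\rfloor}$ for all $x,y$ and $\|g^{(k)}\|_\infty\le M$ for $k=0,\dots,\lfloor\alpha\rfloor$; $M$ is a fixed sufficiently large constant. $\Sigma_0=\{V\in[0,M]^n:V_i=\sigma^2\ \forall i,\ \sigma^2\in[0,M]\}$; $\Sigma_1(\varepsilon)=\{V\in[0,M]^n:\sqrt{\frac1n\sum_{i=1}^n(V_i-\bar V_n)^2}\ge\varepsilon\}$, $\bar V_n=\frac1n\sum_iV_i$. $P_{f,V}$ is the law of the data. *)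

theory Defs
  imports "HOL-Probability.Probability"
begin

definition holder_class :: "real \<Rightarrow> real \<Rightarrow> (real \<Rightarrow> real) set" where
  "holder_class \<alpha> M = {g. \<exists>D :: nat \<Rightarrow> real \<Rightarrow> real.
      (\<forall>x\<in>{0..1}. D 0 x = g x) \<and>
      (\<forall>j < nat \<lfloor>\<alpha>\<rfloor>. \<forall>x\<in>{0..1}.
          (D j has_real_derivative D (Suc j) x) (at x within {0..1})) \<and>
      (\<forall>j \<le> nat \<lfloor>\<alpha>\<rfloor>. \<forall>x\<in>{0..1}. \<bar>D j x\<bar> \<le> M) \<and>
      (\<forall>x\<in>{0..1}. \<forall>y\<in>{0..1}.
          \<bar>D (nat \<lfloor>\<alpha>\<rfloor>) x - D (nat \<lfloor>\<alpha>\<rfloor>) y\<bar> \<le> M * \<bar>x - y\<bar> powr (\<alpha> - of_int \<lfloor>\<alpha>\<rfloor>))}"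

definition mean_V :: "nat \<Rightarrow> (nat \<Rightarrow> real) \<Rightarrow> real" where
  "mean_V n V = (\<Sum>i=1..n. V i) / real n"

definition Sigma0 :: "real \<Rightarrow> nat \<Rightarrow> (nat \<Rightarrow> real) set" where
  "Sigma0 M n = {V. (\<forall>i\<in>{1..n}. V i \<in> {0..M}) \<and>
                    (\<exists>s2\<in>{0..M}. \<forall>i\<in>{1..n}. V i = s2)}"

definition Sigma1 :: "real \<Rightarrow> nat \<Rightarrow> real \<Rightarrow> (nat \<Rightarrow> real) set" where
  "Sigma1 M n \<epsilon> = {V. (\<forall>i\<in>{1..n}. V i \<in> {0..M}) \<and>
        sqrt ((\<Sum>i=1..n. (V i - mean_V n V)\<^sup>2) / real n) \<ge> \<epsilon>}"

definition gauss :: "real \<Rightarrow> real \<Rightarrow> real measure" where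
  "gauss \<mu> v = (if v = 0 then return lborel \<mu> else density lborel (normal_density \<mu> (sqrt v)))"

definition data_law :: "nat \<Rightarrow> (real \<Rightarrow> real) \<Rightarrow> (nat \<Rightarrow> real) \<Rightarrow> (nat \<Rightarrow> real) measure" where
  "data_law n f V = PiM {1..n} (\<lambda>i. gauss (f (real i / real n)) (V i))"

definition is_test :: "nat \<Rightarrow> ((nat \<Rightarrow> real) \<Rightarrow> real) \<Rightarrow> bool" where
  "is_test n \<phi> \<longleftrightarrow> \<phi> \<in> borel_measurable (PiM {1..n} (\<lambda>i. lborel)) \<and>
                    (\<forall>y. \<phi> y \<in> {0, 1})"

definition prob_test :: "nat \<Rightarrow> (real \<Rightarrow> real) \<Rightarrow> (nat \<Rightarrow> real) \<Rightarrow> ((nat \<Rightarrow> real) \<Rightarrow> real) \<Rightarrow> real \<Rightarrow> real" where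
  "prob_test n f V \<phi> b = measure (data_law n f V) {y \<in> space (data_law n f V). \<phi> y = b}"

end

theory Submission
  imports Defs
begin


lemma sets_gauss[simp]: "sets (gauss \<mu> v) = sets lborel"
  by (simp add: gauss_def)

lemma nd_abs: "normal_density \<mu> \<bar>s\<bar> = normal_density \<mu> s"
  by (simp add: normal_density_def[abs_def])

lemma prob_gauss: "prob_space (gauss \<mu> v)"
proof (cases "v = 0")
  case True then show ?thesis by (simp add: gauss_def prob_space_return)
next
  case False
  then have "0 < \<bar>sqrt v\<bar>" by simp
  from prob_space_normal_density[OF this, of \<mu>] False show ?thesis by (simp add: gauss_def nd_abs)
qed

lemma sets_data: "sets (data_law n f V) = sets (PiM {1..n} (\<lambda>i. lborel))"
  unfolding data_law_def by (rule sets_PiM_cong) auto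

lemma space_data: "space (data_law n f V) = space (PiM {1..n} (\<lambda>i. lborel))"
  using sets_data by (rule sets_eq_imp_space_eq)

lemma prob_data: "prob_space (data_law n f V)"
  unfolding data_law_def by (rule prob_space_PiM) (rule prob_gauss)

lemma PiM_density_prod:
  fixes f :: "'i \<Rightarrow> real \<Rightarrow> real"
  assumes fin: "finite I"
    and meas: "\<And>i. i \<in> I \<Longrightarrow> f i \<in> borel_measurable lborel"
    and ps: "\<And>i. i \<in> I \<Longrightarrow> prob_space (density lborel (f i))"
  shows "PiM I (\<lambda>i. density lborel (f i)) = density (PiM I (\<lambda>i. lborel)) (\<lambda>y. \<Prod>i\<in>I. ennreal (f i (y i)))"
proof -
  define M' where "M' i = (if i \<in> I then density lborel (f i) else lborel)" for i
  have eqM: "PiM I (\<lambda>i. density lborel (f i)) = PiM I M'"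
    by (rule PiM_cong) (auto simp: M'_def)
  have sf: "sigma_finite_measure (M' i)" for i
  proof (cases "i \<in> I")
    case True
    then interpret prob_space "M' i" using ps by (simp add: M'_def)
    show ?thesis by unfold_locales
  next
    case False then show ?thesis by (simp add: M'_def lborel.sigma_finite_measure_axioms)
  qed
  interpret P': product_sigma_finite M' using sf by (simp add: product_sigma_finite_def)
  interpret L: product_sigma_finite "\<lambda>i. lborel :: real measure"
    by (simp add: product_sigma_finite_def lborel.sigma_finite_measure_axioms)
  have setsM': "sets (M' i) = sets lborel" for i by (simp add: M'_def)
  have meas2[measurable]: "(\<lambda>y. \<Prod>i\<in>I. ennreal (f i (y i))) \<in> borel_measurable (PiM I (\<lambda>i. lborel))"
    using meas by (intro borel_measurable_prod_ennreal) (auto intro!: measurable_compose[OF measurable_component_singleton])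
  have "density (PiM I (\<lambda>i. lborel)) (\<lambda>y. \<Prod>i\<in>I. ennreal (f i (y i))) = PiM I M'"
  proof (rule P'.PiM_eqI[OF fin])
    show "sets (density (PiM I (\<lambda>i. lborel)) (\<lambda>y. \<Prod>i\<in>I. ennreal (f i (y i)))) = sets (PiM I M')"
      by (simp, rule sets_PiM_cong) (auto simp: setsM')
  next
    fix A assume A: "\<And>i. i \<in> I \<Longrightarrow> A i \<in> sets (M' i)"
    then have A': "\<And>i. i \<in> I \<Longrightarrow> A i \<in> sets lborel" by (simp add: setsM')
    have PA: "Pi\<^sub>E I A \<in> sets (PiM I (\<lambda>i. lborel))"
      using A' fin by (intro sets_PiM_I_finite) auto
    have "emeasure (density (PiM I (\<lambda>i. lborel)) (\<lambda>y. \<Prod>i\<in>I. ennreal (f i (y i)))) (Pi\<^sub>E I A)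
        = (\<integral>\<^sup>+ y. (\<Prod>i\<in>I. ennreal (f i (y i))) * indicator (Pi\<^sub>E I A) y \<partial>PiM I (\<lambda>i. lborel))"
      by (rule emeasure_density[OF meas2 PA])
    also have "\<dots> = (\<integral>\<^sup>+ y. (\<Prod>i\<in>I. ennreal (f i (y i)) * indicator (A i) (y i)) \<partial>PiM I (\<lambda>i. lborel))"
    proof (rule nn_integral_cong)
      fix y assume y: "y \<in> space (PiM I (\<lambda>i. lborel :: real measure))"
      then have ext: "y \<in> extensional I" by (simp add: space_PiM PiE_def)
      have "indicator (Pi\<^sub>E I A) y = (\<Prod>i\<in>I. indicator (A i) (y i) :: ennreal)"
        using ext by (auto simp: indicator_def PiE_def Pi_def prod_zero_iff fin)
      then show "(\<Prod>i\<in>I. ennreal (f i (y i))) * indicator (Pi\<^sub>E I A) y = (\<Prod>i\<in>I. ennreal (f i (y i)) * indicator (A i) (y i))"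
        by (simp add: prod.distrib)
    qed
    also have "\<dots> = (\<Prod>i\<in>I. \<integral>\<^sup>+ x. ennreal (f i x) * indicator (A i) x \<partial>lborel)"
      using A' meas by (intro L.product_nn_integral_prod[OF fin]) auto
    also have "\<dots> = (\<Prod>i\<in>I. emeasure (M' i) (A i))"
      using A' meas by (intro prod.cong refl) (simp add: M'_def emeasure_density)
    finally show "emeasure (density (PiM I (\<lambda>i. lborel)) (\<lambda>y. \<Prod>i\<in>I. ennreal (f i (y i)))) (Pi\<^sub>E I A) = (\<Prod>i\<in>I. emeasure (M' i) (A i))" .
  qed
  then show ?thesis using eqM by simp
qed



lemma nn_to_real:
  fixes f :: "'a \<Rightarrow> real"
  assumes f: "f \<in> borel_measurable M" and nn: "\<And>x. 0 \<le> f x"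
    and eq: "(\<integral>\<^sup>+x. ennreal (f x) \<partial>M) = ennreal c" and c: "0 \<le> c"
  shows "integrable M f" "integral\<^sup>L M f = c"
proof -
  show I: "integrable M f"
    using eq f nn by (intro integrableI_nonneg) auto
  have "ennreal (integral\<^sup>L M f) = ennreal c"
    using nn_integral_eq_integral[OF I] nn eq by simp
  then show "integral\<^sup>L M f = c"
    using c nn by (simp add: integral_nonneg_AE)
qed

lemma gauss_point:
  fixes a b x :: real
  assumes a: "0 < a" and b: "0 < b" and w: "0 < a + b - a * b"
  shows "normal_density 0 (sqrt a) x * normal_density 0 (sqrt b) x / normal_density 0 1 x
       = (1 / sqrt (a + b - a * b)) * normal_density 0 (sqrt (a * b / (a + b - a * b))) x"
proof -
  define w where "w = a + b - a * b"
  have w0: "0 < w" using w by (simp add: w_def)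
  have e: "exp (- x\<^sup>2 / (2 * a)) * exp (- x\<^sup>2 / (2 * b)) / exp (- x\<^sup>2 / 2) = exp (- x\<^sup>2 / (2 * (a * b / w)))"
  proof -
    have "- x\<^sup>2 / (2 * a) + - x\<^sup>2 / (2 * b) - - x\<^sup>2 / 2 = - x\<^sup>2 / (2 * (a * b / w))"
      using a b w0 by (simp add: w_def field_simps)
    then show ?thesis by (simp add: exp_add[symmetric] exp_diff[symmetric])
  qed
  have c: "1 / sqrt (2 * pi * a) * (1 / sqrt (2 * pi * b)) / (1 / sqrt (2 * pi)) = 1 / sqrt w * (1 / sqrt (2 * pi * (a * b / w)))"
  proof -
    have "sqrt (2 * pi * a) * sqrt (2 * pi * b) = sqrt (2*pi) * sqrt (2 * pi * a * b)"
      by (simp add: real_sqrt_mult[symmetric] ac_simps)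
    moreover have "sqrt w * sqrt (2 * pi * (a * b / w)) = sqrt (2 * pi * a * b)"
      using w0 by (simp add: real_sqrt_mult[symmetric])
    ultimately show ?thesis using a b w0 by (simp add: field_simps)
  qed
  have "normal_density 0 (sqrt a) x * normal_density 0 (sqrt b) x / normal_density 0 1 x
     = (1 / sqrt (2 * pi * a) * (1 / sqrt (2 * pi * b)) / (1 / sqrt (2 * pi))) *
       (exp (- x\<^sup>2 / (2 * a)) * exp (- x\<^sup>2 / (2 * b)) / exp (- x\<^sup>2 / 2))"
    using a b by (simp add: normal_density_def)
  also have "\<dots> = (1 / sqrt w) * normal_density 0 (sqrt (a * b / w)) x"
    unfolding c e using a b w0 by (simp add: normal_density_def)
  finally show ?thesis by (simp add: w_def)
qed

lemma gauss_nn: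
  fixes a b :: real
  assumes a: "0 < a" and b: "0 < b" and w: "0 < a + b - a * b"
  shows "(\<integral>\<^sup>+x. ennreal (normal_density 0 (sqrt a) x * normal_density 0 (sqrt b) x / normal_density 0 1 x) \<partial>lborel)
       = ennreal (1 / sqrt (a + b - a * b))"
proof -
  define w where "w = a + b - a * b"
  have w0: "0 < w" using w by (simp add: w_def)
  have s: "0 < sqrt (a * b / w)" using a b w0 by simp
  have "(\<integral>\<^sup>+x. ennreal (normal_density 0 (sqrt a) x * normal_density 0 (sqrt b) x / normal_density 0 1 x) \<partial>lborel)
      = (\<integral>\<^sup>+x. ennreal (1 / sqrt w) * ennreal (normal_density 0 (sqrt (a * b / w)) x) \<partial>lborel)"
    using gauss_point[OF a b w] w0
    by (intro nn_integral_cong) (simp add: w_def ennreal_mult[symmetric])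
  also have "\<dots> = ennreal (1 / sqrt w) * (\<integral>\<^sup>+x. ennreal (normal_density 0 (sqrt (a * b / w)) x) \<partial>lborel)"
    by (rule nn_integral_cmult) simp
  also have "(\<integral>\<^sup>+x. ennreal (normal_density 0 (sqrt (a * b / w)) x) \<partial>lborel) = 1"
    using integral_normal_density[OF s, of 0] integrable_normal_density[OF s, of 0] by (subst nn_integral_eq_integral) auto
  finally show ?thesis by (simp add: w_def)
qed



abbreviation LL :: "nat \<Rightarrow> (nat \<Rightarrow> real) measure" where
  "LL n \<equiv> PiM {1..n} (\<lambda>i. lborel)"

definition pd :: "nat \<Rightarrow> (nat \<Rightarrow> real) \<Rightarrow> (nat \<Rightarrow> real) \<Rightarrow> real" where
  "pd n V y = (\<Prod>i\<in>{1..n}. normal_density 0 (sqrt (V i)) (y i))"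

lemma pd_meas[measurable]: "pd n V \<in> borel_measurable (LL n)"
  unfolding pd_def[abs_def]
  by (intro borel_measurable_prod) (auto intro!: measurable_compose[OF measurable_component_singleton])

lemma pd_meas'[measurable]: "pd n V \<in> borel_measurable (PiM {Suc 0..n} (\<lambda>i. lborel))"
  using pd_meas[of n V] by simp

lemma pd_meas_e[measurable]: "(\<lambda>y. ennreal (pd n V y)) \<in> borel_measurable (PiM {1..n} (\<lambda>i. lborel))"
  by measurable

lemma pd_meas_e'[measurable]: "(\<lambda>y. ennreal (pd n V y)) \<in> borel_measurable (PiM {Suc 0..n} (\<lambda>i. lborel))"
  by measurable

lemma pd_nonneg: "0 \<le> pd n V y"
  unfolding pd_def by (intro prod_nonneg) auto

lemma pd_pos: "(\<And>i. i \<in> {1..n} \<Longrightarrow> 0 < V i) \<Longrightarrow> 0 < pd n V y"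
  unfolding pd_def by (intro prod_pos normal_density_pos) auto

lemma data_dens:
  assumes V: "\<And>i. i \<in> {1..n} \<Longrightarrow> 0 < V i"
  shows "data_law n (\<lambda>_. 0) V = density (LL n) (\<lambda>y. ennreal (pd n V y))"
proof -
  have "data_law n (\<lambda>_. 0) V = PiM {1..n} (\<lambda>i. density lborel (normal_density 0 (sqrt (V i))))"
    unfolding data_law_def
  proof (intro PiM_cong refl)
    fix i assume "i \<in> {1..n}"
    then have "V i \<noteq> 0" using V by force
    then show "gauss ((\<lambda>_. 0) (real i / real n)) (V i) = density lborel (normal_density 0 (sqrt (V i)))"
      by (simp add: gauss_def)
  qed
  also have "\<dots> = density (LL n) (\<lambda>y. \<Prod>i\<in>{1..n}. ennreal (normal_density 0 (sqrt (V i)) (y i)))"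
    using V by (intro PiM_density_prod) (auto intro!: prob_space_normal_density)
  also have "\<dots> = density (LL n) (\<lambda>y. ennreal (pd n V y))"
    by (intro density_cong) (auto simp: pd_def prod_ennreal)
  finally show ?thesis .
qed

lemma pd_int:
  assumes V: "\<And>i. i \<in> {1..n} \<Longrightarrow> 0 < V i"
  shows "integrable (LL n) (pd n V)" "integral\<^sup>L (LL n) (pd n V) = 1"
proof -
  interpret prob_space "data_law n (\<lambda>_. 0) V" by (rule prob_data)
  have "1 = emeasure (data_law n (\<lambda>_. 0) V) (space (data_law n (\<lambda>_. 0) V))"
    by (simp add: emeasure_space_1)
  also have "\<dots> = (\<integral>\<^sup>+y. ennreal (pd n V y) \<partial>LL n)"
  proof -
    have "emeasure (data_law n (\<lambda>_. 0) V) (space (data_law n (\<lambda>_. 0) V)) = emeasure (density (LL n) (\<lambda>y. ennreal (pd n V y))) (space (LL n))"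
      using data_dens[of n V, OF V] by (simp add: space_data)
    also have "\<dots> = (\<integral>\<^sup>+y. ennreal (pd n V y) * indicator (space (LL n)) y \<partial>LL n)"
      by (rule emeasure_density) auto
    also have "\<dots> = (\<integral>\<^sup>+y. ennreal (pd n V y) \<partial>LL n)"
      by (intro nn_integral_cong) simp
    finally show ?thesis .
  qed
  finally have eq: "(\<integral>\<^sup>+y. ennreal (pd n V y) \<partial>LL n) = ennreal 1" by simp
  show "integrable (LL n) (pd n V)" "integral\<^sup>L (LL n) (pd n V) = 1"
    using nn_to_real[OF pd_meas pd_nonneg eq] by auto
qed

lemma measure_pd:
  assumes V: "\<And>i. i \<in> {1..n} \<Longrightarrow> 0 < V i" and A: "A \<in> sets (LL n)"
  shows "measure (data_law n (\<lambda>_. 0) V) A = (\<integral>y. pd n V y * indicator A y \<partial>LL n)"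
proof -
  have I: "integrable (LL n) (\<lambda>y. pd n V y * indicator A y)"
    using A pd_int(1)[OF V] by (rule integrable_real_mult_indicator)
  have "emeasure (data_law n (\<lambda>_. 0) V) A = (\<integral>\<^sup>+y. ennreal (pd n V y) * indicator A y \<partial>LL n)"
    using A data_dens[of n V, OF V] by (simp add: emeasure_density)
  also have "\<dots> = (\<integral>\<^sup>+y. ennreal (pd n V y * indicator A y) \<partial>LL n)"
    by (intro nn_integral_cong) (simp add: indicator_def)
  also have "\<dots> = ennreal (\<integral>y. pd n V y * indicator A y \<partial>LL n)"
    using I by (intro nn_integral_eq_integral) (auto simp: pd_nonneg)
  finally show ?thesis
    by (simp add: measure_def integral_nonneg_AE pd_nonneg)
qed

lemma cross:
  assumes V: "\<And>i. i \<in> {1..n} \<Longrightarrow> 0 < V i" and W: "\<And>i. i \<in> {1..n} \<Longrightarrow> 0 < W i"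
    and VW: "\<And>i. i \<in> {1..n} \<Longrightarrow> 0 < V i + W i - V i * W i"
  shows "integrable (LL n) (\<lambda>y. pd n V y * pd n W y / pd n (\<lambda>_. 1) y)"
    "(\<integral>y. pd n V y * pd n W y / pd n (\<lambda>_. 1) y \<partial>LL n) = (\<Prod>i\<in>{1..n}. 1 / sqrt (V i + W i - V i * W i))"
proof -
  interpret L: product_sigma_finite "\<lambda>i. lborel :: real measure"
    by (simp add: product_sigma_finite_def lborel.sigma_finite_measure_axioms)
  let ?g = "\<lambda>i x. normal_density 0 (sqrt (V i)) x * normal_density 0 (sqrt (W i)) x / normal_density 0 1 x"
  have pt: "pd n V y * pd n W y / pd n (\<lambda>_. 1) y = (\<Prod>i\<in>{1..n}. ?g i (y i))" for y
    unfolding pd_def by (simp add: prod.distrib[symmetric] prod_dividef[symmetric])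
  have "(\<integral>\<^sup>+y. ennreal (pd n V y * pd n W y / pd n (\<lambda>_. 1) y) \<partial>LL n)
      = (\<integral>\<^sup>+y. (\<Prod>i\<in>{1..n}. ennreal (?g i (y i))) \<partial>LL n)"
    unfolding pt by (intro nn_integral_cong) (simp add: prod_ennreal)
  also have "\<dots> = (\<Prod>i\<in>{1..n}. \<integral>\<^sup>+x. ennreal (?g i x) \<partial>lborel)"
    by (intro L.product_nn_integral_prod) auto
  also have "\<dots> = (\<Prod>i\<in>{1..n}. ennreal (1 / sqrt (V i + W i - V i * W i)))"
    using V W VW by (intro prod.cong refl) (simp add: gauss_nn)
  also have "\<dots> = ennreal (\<Prod>i\<in>{1..n}. 1 / sqrt (V i + W i - V i * W i))"
    using VW by (intro prod_ennreal) (simp add: less_imp_le)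
  finally have eq: "(\<integral>\<^sup>+y. ennreal (pd n V y * pd n W y / pd n (\<lambda>_. 1) y) \<partial>LL n) = ennreal (\<Prod>i\<in>{1..n}. 1 / sqrt (V i + W i - V i * W i))" .
  have nn: "0 \<le> (\<Prod>i\<in>{1..n}. 1 / sqrt (V i + W i - V i * W i))"
    using VW by (intro prod_nonneg) (simp add: less_imp_le)
  have m: "(\<lambda>y. pd n V y * pd n W y / pd n (\<lambda>_. 1) y) \<in> borel_measurable (LL n)" by measurable
  show "integrable (LL n) (\<lambda>y. pd n V y * pd n W y / pd n (\<lambda>_. 1) y)"
    "(\<integral>y. pd n V y * pd n W y / pd n (\<lambda>_. 1) y \<partial>LL n) = (\<Prod>i\<in>{1..n}. 1 / sqrt (V i + W i - V i * W i))"
    using nn_to_real[OF m _ eq nn] by (auto simp: pd_nonneg)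
qed



definition esg :: "nat \<Rightarrow> (nat \<Rightarrow> real) \<Rightarrow> nat \<Rightarrow> real" where
  "esg m s i = (if (i + 1) div 2 \<le> m then (-1) ^ i * s ((i + 1) div 2) else 0)"

definition SS :: "nat \<Rightarrow> (nat \<Rightarrow> real) set" where
  "SS m = PiE {1..m} (\<lambda>_. {-1, 1})"

lemma sum_pairs:
  fixes f :: "nat \<Rightarrow> 'a::comm_monoid_add"
  shows "(\<Sum>i\<in>{1..2*m}. f i) = (\<Sum>k\<in>{1..m}. f (2*k - 1) + f (2*k))"
proof (induction m)
  case 0 then show ?case by simp
next
  case (Suc m)
  have e: "{1..2 * Suc m} = insert (2*m+2) (insert (2*m+1) {1..2*m})" by auto
  have "(\<Sum>i\<in>{1..2*Suc m}. f i) = f (2*m+2) + (f (2*m+1) + (\<Sum>i\<in>{1..2*m}. f i))"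
    unfolding e by (simp add: add.assoc)
  then show ?case using Suc by (simp add: add_ac)
qed

lemma prod_pairs:
  fixes f :: "nat \<Rightarrow> 'a::comm_monoid_mult"
  shows "(\<Prod>i\<in>{1..2*m}. f i) = (\<Prod>k\<in>{1..m}. f (2*k - 1) * f (2*k))"
proof (induction m)
  case 0 then show ?case by simp
next
  case (Suc m)
  have e: "{1..2 * Suc m} = insert (2*m+2) (insert (2*m+1) {1..2*m})" by auto
  have "(\<Prod>i\<in>{1..2*Suc m}. f i) = f (2*m+2) * (f (2*m+1) * (\<Prod>i\<in>{1..2*m}. f i))"
    unfolding e by (simp add: mult.assoc)
  then show ?case using Suc by (simp add: mult_ac)
qed

lemma esg_odd: "k \<in> {1..m} \<Longrightarrow> esg m s (2*k - 1) = - s k"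
proof -
  assume k: "k \<in> {1..m}"
  then have "(2*k - 1 + 1) div 2 = k" by auto
  moreover have "(-1::real) ^ (2*k - 1) = -1" using k by (simp add: power_minus_odd odd_pos)
  ultimately show ?thesis using k by (simp add: esg_def)
qed

lemma esg_odd': "k \<in> {1..m} \<Longrightarrow> esg m s (2*k - Suc 0) = - s k"
  using esg_odd[of k m s] by simp

lemma esg_even: "k \<in> {1..m} \<Longrightarrow> esg m s (2*k) = s k"
proof -
  assume k: "k \<in> {1..m}"
  then have "(2*k + 1) div 2 = k" by auto
  then show ?thesis using k by (simp add: esg_def)
qed

lemma esg_last: "esg m s (2*m+1) = 0"
  by (simp add: esg_def)

lemma SS_val: "s \<in> SS m \<Longrightarrow> k \<in> {1..m} \<Longrightarrow> s k = -1 \<or> s k = 1"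
  unfolding SS_def by auto

lemma esg_bound: "s \<in> SS m \<Longrightarrow> 1 \<le> i \<Longrightarrow> \<bar>esg m s i\<bar> \<le> 1"
proof -
  assume s: "s \<in> SS m" and i: "1 \<le> i"
  show ?thesis
  proof (cases "(i + 1) div 2 \<le> m")
    case True
    then have "(i+1) div 2 \<in> {1..m}" using i by auto
    then have "s ((i+1) div 2) = -1 \<or> s ((i+1) div 2) = 1" using SS_val[OF s] by blast
    then show ?thesis using True by (auto simp: esg_def abs_mult power_abs)
  qed (simp add: esg_def)
qed

lemma n_cases: "(n::nat) = 2 * (n div 2) \<or> n = 2 * (n div 2) + 1"
  by presburger

lemma sum_esg: "(\<Sum>i\<in>{1..n}. esg (n div 2) s i) = 0"
proof -
  let ?m = "n div 2"
  have a: "(\<Sum>i\<in>{1..2*?m}. esg ?m s i) = 0"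
    unfolding sum_pairs by (intro sum.neutral) (simp add: esg_odd esg_odd' esg_even)
  show ?thesis
  proof (cases "n = 2 * ?m")
    case True then show ?thesis using a by metis
  next
    case False
    then have n: "n = 2*?m + 1" using n_cases by blast
    have "{1..n} = insert (2*?m+1) {1..2*?m}" using n by auto
    then show ?thesis using a esg_last[of ?m s] by simp
  qed
qed

lemma sum_esg2: "s \<in> SS (n div 2) \<Longrightarrow> (\<Sum>i\<in>{1..n}. (esg (n div 2) s i)\<^sup>2) = 2 * real (n div 2)"
proof -
  assume s: "s \<in> SS (n div 2)"
  let ?m = "n div 2"
  have a: "(\<Sum>i\<in>{1..2*?m}. (esg ?m s i)\<^sup>2) = 2 * real ?m"
  proof -
    have "(\<Sum>i\<in>{1..2*?m}. (esg ?m s i)\<^sup>2) = (\<Sum>k\<in>{1..?m}. 2)"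
      unfolding sum_pairs
    proof (intro sum.cong refl)
      fix k assume k: "k \<in> {1..?m}"
      show "(esg ?m s (2 * k - 1))\<^sup>2 + (esg ?m s (2 * k))\<^sup>2 = 2"
        using SS_val[OF s k] by (auto simp: esg_odd[OF k] esg_odd'[OF k] esg_even[OF k])
    qed
    then show ?thesis by simp
  qed
  show ?thesis
  proof (cases "n = 2 * ?m")
    case True then show ?thesis using a by metis
  next
    case False
    then have n: "n = 2*?m + 1" using n_cases by blast
    have "{1..n} = insert (2*?m+1) {1..2*?m}" using n by auto
    then show ?thesis using a esg_last[of ?m s] by simp
  qed
qed

lemma prod_esg:
  assumes s: "s \<in> SS (n div 2)" and s': "s' \<in> SS (n div 2)" and d: "\<bar>\<delta>\<bar> < 1"
  shows "(\<Prod>i\<in>{1..n}. 1 / sqrt (1 - \<delta>\<^sup>2 * (esg (n div 2) s i * esg (n div 2) s' i)))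
        = (\<Prod>k\<in>{1..n div 2}. 1 / (1 - \<delta>\<^sup>2 * (s k * s' k)))"
proof -
  let ?m = "n div 2"
  have d2: "\<delta>\<^sup>2 < 1" using d by (simp add: abs_square_less_1)
  have a: "(\<Prod>i\<in>{1..2*?m}. 1 / sqrt (1 - \<delta>\<^sup>2 * (esg ?m s i * esg ?m s' i)))
        = (\<Prod>k\<in>{1..?m}. 1 / (1 - \<delta>\<^sup>2 * (s k * s' k)))"
    unfolding prod_pairs
  proof (intro prod.cong refl)
    fix k assume k: "k \<in> {1..?m}"
    have p: "0 < 1 - \<delta>\<^sup>2 * (s k * s' k)"
    proof -
      have h: "-1 < \<delta>\<^sup>2" by (smt (verit) zero_le_power2)
      show ?thesis using SS_val[OF s k] SS_val[OF s' k] d2 h by auto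
    qed
    have "1 / sqrt (1 - \<delta>\<^sup>2 * (- s k * - s' k)) * (1 / sqrt (1 - \<delta>\<^sup>2 * (s k * s' k)))
        = 1 / (sqrt (1 - \<delta>\<^sup>2 * (s k * s' k)))\<^sup>2"
      by (simp add: power2_eq_square)
    also have "\<dots> = 1 / (1 - \<delta>\<^sup>2 * (s k * s' k))" using p by simp
    finally show "1 / sqrt (1 - \<delta>\<^sup>2 * (esg ?m s (2 * k - 1) * esg ?m s' (2 * k - 1))) *
          (1 / sqrt (1 - \<delta>\<^sup>2 * (esg ?m s (2 * k) * esg ?m s' (2 * k)))) = 1 / (1 - \<delta>\<^sup>2 * (s k * s' k))"
      by (simp add: esg_odd[OF k] esg_odd'[OF k] esg_even[OF k])
  qed
  show ?thesis
  proof (cases "n = 2 * ?m")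
    case True then show ?thesis using a by metis
  next
    case False
    then have n: "n = 2*?m + 1" using n_cases by blast
    have "{1..n} = insert (2*?m+1) {1..2*?m}" using n by auto
    then show ?thesis using a esg_last[of ?m] by simp
  qed
qed

lemma card_SS: "card (SS m) = 2 ^ m"
  unfolding SS_def by (simp add: card_PiE numeral_2_eq_2)

lemma finite_SS: "finite (SS m)"
  unfolding SS_def by (simp add: finite_PiE)

lemma double_sum:
  fixes g :: "real \<Rightarrow> real"
  shows "(\<Sum>s\<in>SS m. \<Sum>s'\<in>SS m. \<Prod>k\<in>{1..m}. g (s k * s' k)) = (2 * g 1 + 2 * g (-1)) ^ m"
proof -
  have "(2 * g (-1) + 2 * g 1) ^ m = (\<Prod>k\<in>{1..m}. \<Sum>u\<in>{-1,1::real}. \<Sum>v\<in>{-1,1::real}. g (u * v))"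
    by simp
  also have "\<dots> = (\<Sum>s\<in>SS m. \<Prod>k\<in>{1..m}. \<Sum>v\<in>{-1,1::real}. g (s k * v))"
    unfolding SS_def by (rule prod_sum_PiE) auto
  also have "\<dots> = (\<Sum>s\<in>SS m. \<Sum>s'\<in>SS m. \<Prod>k\<in>{1..m}. g (s k * s' k))"
    unfolding SS_def by (intro sum.cong refl prod_sum_PiE) auto
  finally show ?thesis by (metis add.commute)
qed



lemma ptineq:
  fixes p b \<eta> x :: real
  assumes p: "0 < p" and b: "0 \<le> b" and e: "0 < \<eta>" and x: "x = 0 \<or> x = 1"
  shows "p * x \<le> b * x + ((\<eta>/2 + 1/(2*\<eta>)) * p + (b\<^sup>2 / p) / (2*\<eta>) - b/\<eta>)"
proof -
  have r: "(\<eta>/2 + 1/(2*\<eta>)) * p + (b\<^sup>2 / p) / (2*\<eta>) - b/\<eta> = \<eta> * p / 2 + (p - b)\<^sup>2 / (2 * \<eta> * p)"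
    using p e by (simp add: field_simps power2_eq_square)
  have sq: "2 * \<eta> * p * \<bar>p - b\<bar> \<le> (\<eta> * p)\<^sup>2 + (p - b)\<^sup>2"
  proof -
    have "0 \<le> (\<eta> * p - \<bar>p - b\<bar>)\<^sup>2" by simp
    then show ?thesis by (simp add: power2_eq_square algebra_simps abs_mult_self_eq)
  qed
  have "\<bar>p - b\<bar> \<le> \<eta> * p / 2 + (p - b)\<^sup>2 / (2 * \<eta> * p)"
  proof -
    have pos: "0 < 2 * \<eta> * p" using p e by simp
    have "\<bar>p - b\<bar> = (2 * \<eta> * p * \<bar>p - b\<bar>) / (2 * \<eta> * p)" using pos p e by simp
    also have "\<dots> \<le> ((\<eta> * p)\<^sup>2 + (p - b)\<^sup>2) / (2 * \<eta> * p)"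
      using sq pos by (intro divide_right_mono) auto
    also have "\<dots> = \<eta> * p / 2 + (p - b)\<^sup>2 / (2 * \<eta> * p)"
      using pos p e by (simp add: field_simps power2_eq_square)
    finally show ?thesis .
  qed
  moreover have "(p - b) * x \<le> \<bar>p - b\<bar>" using x by auto
  ultimately show ?thesis unfolding r by (simp add: algebra_simps)
qed



definition Valt :: "nat \<Rightarrow> real \<Rightarrow> (nat \<Rightarrow> real) \<Rightarrow> nat \<Rightarrow> real" where
  "Valt m \<delta> s i = 1 + \<delta> * esg m s i"

lemma Valt_pos: "s \<in> SS m \<Longrightarrow> 1 \<le> i \<Longrightarrow> 0 \<le> \<delta> \<Longrightarrow> \<delta> < 1 \<Longrightarrow> 0 < Valt m \<delta> s i"
proof -
  assume s: "s \<in> SS m" and i: "1 \<le> i" and d: "0 \<le> \<delta>" "\<delta> < 1"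
  have "\<bar>\<delta> * esg m s i\<bar> \<le> \<delta>" using esg_bound[OF s i] d by (simp add: abs_mult mult_left_le)
  then show ?thesis using d by (simp add: Valt_def abs_le_iff)
qed

lemma core:
  fixes n :: nat and \<delta> \<eta> :: real
  assumes d: "0 \<le> \<delta>" "\<delta> < 1" and e: "0 < \<eta>"
    and K: "(1 / (1 - \<delta>^4)) ^ (n div 2) \<le> 1 + \<eta>\<^sup>2"
    and A: "A \<in> sets (LL n)"
  shows "measure (data_law n (\<lambda>_. 0) (\<lambda>_. 1)) A
     \<le> (\<Sum>s\<in>SS (n div 2). measure (data_law n (\<lambda>_. 0) (Valt (n div 2) \<delta> s)) A) / 2 ^ (n div 2) + \<eta>"
proof -
  define m where "m = n div 2"
  define S where "S = SS m"
  define V where "V s = Valt m \<delta> s" for s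
  define p0 where "p0 = pd n (\<lambda>_. 1)"
  define ps where "ps s = pd n (V s)" for s
  define pb where "pb y = (\<Sum>s\<in>S. ps s y) / 2^m" for y
  define q where "q y = (\<Sum>s\<in>S. \<Sum>s'\<in>S. ps s y * ps s' y / p0 y) / 4^m" for y
  have finS: "finite S" by (simp add: S_def finite_SS)
  have Vpos: "\<And>i. i \<in> {1..n} \<Longrightarrow> 0 < V s i" if "s \<in> S" for s
    using that d by (auto simp: V_def S_def intro!: Valt_pos)
  have one: "\<And>i. i \<in> {1..n} \<Longrightarrow> 0 < (\<lambda>_. 1::real) i" by simp
  have p0pos: "0 < p0 y" for y unfolding p0_def by (rule pd_pos) simp
  have psnn: "0 \<le> ps s y" for s y unfolding ps_def by (rule pd_nonneg)
  have pbnn: "0 \<le> pb y" for y unfolding pb_def using psnn by (simp add: sum_nonneg)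
  have ips: "integrable (LL n) (ps s)" if "s \<in> S" for s
    unfolding ps_def using pd_int(1)[of n "V s", OF Vpos[OF that]] .
  have ip0: "integrable (LL n) p0" "integral\<^sup>L (LL n) p0 = 1"
    unfolding p0_def using pd_int[of n "\<lambda>_. 1", OF one] by auto
  have ipb: "integrable (LL n) pb" unfolding pb_def
    using ips by (intro integrable_divide_zero Bochner_Integration.integrable_sum) blast
  have intpb: "integral\<^sup>L (LL n) pb = 1"
  proof -
    have a1: "integral\<^sup>L (LL n) pb = integral\<^sup>L (LL n) (\<lambda>y. \<Sum>s\<in>S. ps s y) / 2^m"
      unfolding pb_def by (rule integral_divide_zero)
    have a2: "integral\<^sup>L (LL n) (\<lambda>y. \<Sum>s\<in>S. ps s y) = (\<Sum>s\<in>S. integral\<^sup>L (LL n) (ps s))"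
      using ips by (intro Bochner_Integration.integral_sum) blast
    have a3: "(\<Sum>s\<in>S. integral\<^sup>L (LL n) (ps s)) = (\<Sum>s\<in>S. 1)"
    proof (intro sum.cong refl)
      fix s assume "s \<in> S"
      then show "integral\<^sup>L (LL n) (ps s) = 1"
        unfolding ps_def by (intro pd_int(2)) (rule Vpos)
    qed
    show ?thesis unfolding a1 a2 a3 by (simp add: S_def card_SS)
  qed
  have VW: "0 < V s i + V s' i - V s i * V s' i" and VW': "V s i + V s' i - V s i * V s' i = 1 - \<delta>\<^sup>2 * (esg m s i * esg m s' i)"
    if "s \<in> S" "s' \<in> S" "i \<in> {1..n}" for s s' i
  proof -
    show eq: "V s i + V s' i - V s i * V s' i = 1 - \<delta>\<^sup>2 * (esg m s i * esg m s' i)"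
      by (simp add: V_def Valt_def algebra_simps power2_eq_square)
    have "\<bar>esg m s i * esg m s' i\<bar> \<le> 1"
      using esg_bound[of s m i] esg_bound[of s' m i] that by (auto simp: S_def abs_mult intro: mult_le_one)
    moreover have "\<delta>\<^sup>2 < 1" using d by (simp add: power_less_one_iff abs_square_less_1)
    moreover have "0 \<le> \<delta>\<^sup>2" by simp
    ultimately have "\<delta>\<^sup>2 * (esg m s i * esg m s' i) < 1"
    proof -
      assume a: "\<bar>esg m s i * esg m s' i\<bar> \<le> 1" "\<delta>\<^sup>2 < 1" "0 \<le> \<delta>\<^sup>2"
      have "\<delta>\<^sup>2 * (esg m s i * esg m s' i) \<le> \<delta>\<^sup>2 * 1"
        using a by (intro mult_left_mono) (auto simp: abs_le_iff)
      then show ?thesis using a by linarith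
    qed
    then show "0 < V s i + V s' i - V s i * V s' i" unfolding eq by simp
  qed
  have icr: "integrable (LL n) (\<lambda>y. ps s y * ps s' y / p0 y)"
    "(\<integral>y. ps s y * ps s' y / p0 y \<partial>LL n) = (\<Prod>k\<in>{1..m}. 1 / (1 - \<delta>\<^sup>2 * (s k * s' k)))"
    if "s \<in> S" "s' \<in> S" for s s'
  proof -
    note c = cross[of n "V s" "V s'", OF Vpos[OF that(1)] Vpos[OF that(2)] VW[OF that]]
    show "integrable (LL n) (\<lambda>y. ps s y * ps s' y / p0 y)" using c(1) by (simp add: ps_def p0_def)
    have "(\<integral>y. ps s y * ps s' y / p0 y \<partial>LL n) = (\<Prod>i\<in>{1..n}. 1 / sqrt (V s i + V s' i - V s i * V s' i))"
      using c(2) by (simp add: ps_def p0_def)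
    also have "\<dots> = (\<Prod>i\<in>{1..n}. 1 / sqrt (1 - \<delta>\<^sup>2 * (esg m s i * esg m s' i)))"
      using VW'[OF that] by (intro prod.cong refl) simp
    also have "\<dots> = (\<Prod>k\<in>{1..m}. 1 / (1 - \<delta>\<^sup>2 * (s k * s' k)))"
      unfolding m_def using that d by (intro prod_esg) (auto simp: S_def m_def)
    finally show "(\<integral>y. ps s y * ps s' y / p0 y \<partial>LL n) = (\<Prod>k\<in>{1..m}. 1 / (1 - \<delta>\<^sup>2 * (s k * s' k)))" .
  qed
  have iq: "integrable (LL n) q" unfolding q_def
    using icr(1) by (intro integrable_divide_zero Bochner_Integration.integrable_sum) blast
  have intq: "integral\<^sup>L (LL n) q = (1 / (1 - \<delta>^4)) ^ m"
  proof -
    have q1: "integral\<^sup>L (LL n) q = integral\<^sup>L (LL n) (\<lambda>y. \<Sum>s\<in>S. \<Sum>s'\<in>S. ps s y * ps s' y / p0 y) / 4^m"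
      unfolding q_def by (rule integral_divide_zero)
    have q2: "integral\<^sup>L (LL n) (\<lambda>y. \<Sum>s\<in>S. \<Sum>s'\<in>S. ps s y * ps s' y / p0 y)
        = (\<Sum>s\<in>S. integral\<^sup>L (LL n) (\<lambda>y. \<Sum>s'\<in>S. ps s y * ps s' y / p0 y))"
      using icr(1) by (intro Bochner_Integration.integral_sum Bochner_Integration.integrable_sum) blast
    have q3: "(\<Sum>s\<in>S. integral\<^sup>L (LL n) (\<lambda>y. \<Sum>s'\<in>S. ps s y * ps s' y / p0 y))
        = (\<Sum>s\<in>S. \<Sum>s'\<in>S. integral\<^sup>L (LL n) (\<lambda>y. ps s y * ps s' y / p0 y))"
      using icr(1) by (intro sum.cong refl Bochner_Integration.integral_sum) blast
    have q4: "(\<Sum>s\<in>S. \<Sum>s'\<in>S. integral\<^sup>L (LL n) (\<lambda>y. ps s y * ps s' y / p0 y))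
        = (\<Sum>s\<in>S. \<Sum>s'\<in>S. \<Prod>k\<in>{1..m}. 1 / (1 - \<delta>\<^sup>2 * (s k * s' k)))"
      using icr(2) by (intro sum.cong refl) blast
    have q5: "(\<Sum>s\<in>S. \<Sum>s'\<in>S. \<Prod>k\<in>{1..m}. 1 / (1 - \<delta>\<^sup>2 * (s k * s' k)))
        = (2 * (1 / (1 - \<delta>\<^sup>2 * 1)) + 2 * (1 / (1 - \<delta>\<^sup>2 * (-1)))) ^ m"
      unfolding S_def by (rule double_sum[where g="\<lambda>t. 1 / (1 - \<delta>\<^sup>2 * t)"])
    have q6: "2 * (1 / (1 - \<delta>\<^sup>2 * 1)) + 2 * (1 / (1 - \<delta>\<^sup>2 * (-1))) = 4 * (1 / (1 - \<delta>^4))"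
    proof -
      have "\<delta>\<^sup>2 < 1" using d by (simp add: abs_square_less_1)
      moreover have d4: "\<delta>^4 = \<delta>\<^sup>2 * \<delta>\<^sup>2" by (simp add: numeral_eq_Suc)
      define u where "u = \<delta>\<^sup>2"
      have u: "0 \<le> u" "u < 1" "\<delta>^4 = u * u" using \<open>\<delta>\<^sup>2 < 1\<close> d4 by (auto simp: u_def)
      have e: "2 * (1 / (1 - u * 1)) + 2 * (1 / (1 - u * (-1))) = 4 * (1 / (1 - u * u))"
        using u by (simp add: field_simps)
      show ?thesis unfolding u(3) u_def[symmetric] by (rule e)
    qed
    have q7: "(4 * (1 / (1 - \<delta>^4))) ^ m / 4 ^ m = (1 / (1 - \<delta>^4)) ^ m"
      unfolding power_mult_distrib by simp
    show ?thesis unfolding q1 q2 q3 q4 q5 q6 q7 ..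
  qed
  have qeq: "q y = (pb y)\<^sup>2 / p0 y" for y
  proof -
    have f: "(2::real)^m * 2^m = 4^m" by (simp add: power_mult_distrib[symmetric])
    have "(pb y)\<^sup>2 = (\<Sum>s\<in>S. ps s y) * (\<Sum>s\<in>S. ps s y) / (2^m * 2^m)"
      unfolding pb_def power2_eq_square by simp
    also have "\<dots> = (\<Sum>s\<in>S. \<Sum>s'\<in>S. ps s y * ps s' y) / 4^m"
      unfolding f sum_product ..
    finally have "(pb y)\<^sup>2 / p0 y = (\<Sum>s\<in>S. \<Sum>s'\<in>S. ps s y * ps s' y) / p0 y / 4^m" by simp
    also have "(\<Sum>s\<in>S. \<Sum>s'\<in>S. ps s y * ps s' y) / p0 y = (\<Sum>s\<in>S. \<Sum>s'\<in>S. ps s y * ps s' y / p0 y)"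
      by (simp only: sum_divide_distrib)
    finally show ?thesis unfolding q_def ..
  qed
  define R where "R y = (\<eta>/2 + 1/(2*\<eta>)) * p0 y + q y / (2*\<eta>) - pb y / \<eta>" for y
  have iR: "integrable (LL n) R" unfolding R_def using ip0 iq ipb
    by (intro Bochner_Integration.integrable_diff Bochner_Integration.integrable_add integrable_mult_right integrable_divide_zero) auto
  have intR: "integral\<^sup>L (LL n) R \<le> \<eta>"
  proof -
    have "integral\<^sup>L (LL n) R = (\<eta>/2 + 1/(2*\<eta>)) + (1 / (1 - \<delta>^4)) ^ m / (2*\<eta>) - 1 / \<eta>"
    proof -
      have "integral\<^sup>L (LL n) R = integral\<^sup>L (LL n) (\<lambda>y. (\<eta>/2 + 1/(2*\<eta>)) * p0 y + q y / (2*\<eta>)) - integral\<^sup>L (LL n) (\<lambda>y. pb y / \<eta>)"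
        unfolding R_def using ip0 iq ipb by (intro Bochner_Integration.integral_diff) auto
      also have "integral\<^sup>L (LL n) (\<lambda>y. (\<eta>/2 + 1/(2*\<eta>)) * p0 y + q y / (2*\<eta>)) = integral\<^sup>L (LL n) (\<lambda>y. (\<eta>/2 + 1/(2*\<eta>)) * p0 y) + integral\<^sup>L (LL n) (\<lambda>y. q y / (2*\<eta>))"
        using ip0 iq by (intro Bochner_Integration.integral_add) auto
      also have "integral\<^sup>L (LL n) (\<lambda>y. (\<eta>/2 + 1/(2*\<eta>)) * p0 y) = (\<eta>/2 + 1/(2*\<eta>))"
        using ip0 by simp
      also have "integral\<^sup>L (LL n) (\<lambda>y. q y / (2*\<eta>)) = (1 / (1 - \<delta>^4)) ^ m / (2*\<eta>)"
        using intq by simp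
      also have "integral\<^sup>L (LL n) (\<lambda>y. pb y / \<eta>) = 1 / \<eta>"
        using intpb by simp
      finally show ?thesis .
    qed
    also have "\<dots> \<le> (\<eta>/2 + 1/(2*\<eta>)) + (1 + \<eta>\<^sup>2) / (2*\<eta>) - 1 / \<eta>"
      using K e by (simp add: m_def divide_right_mono)
    also have "\<dots> = \<eta>" using e by (simp add: field_simps power2_eq_square)
    finally show ?thesis .
  qed
  have ind: "integrable (LL n) (\<lambda>y. pb y * indicator A y)" using A ipb by (rule integrable_real_mult_indicator)
  have "measure (data_law n (\<lambda>_. 0) (\<lambda>_. 1)) A = (\<integral>y. p0 y * indicator A y \<partial>LL n)"
    unfolding p0_def using measure_pd[of n "\<lambda>_. 1", OF one A] .
  also have "\<dots> \<le> (\<integral>y. pb y * indicator A y + R y \<partial>LL n)"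
  proof (rule integral_mono)
    show "integrable (LL n) (\<lambda>y. p0 y * indicator A y)" using A ip0(1) by (rule integrable_real_mult_indicator)
    show "integrable (LL n) (\<lambda>y. pb y * indicator A y + R y)" using ind iR by auto
    fix y
    have "indicator A y = (0::real) \<or> indicator A y = (1::real)" by (simp add: indicator_def)
    from ptineq[OF p0pos pbnn e this]
    show "p0 y * indicator A y \<le> pb y * indicator A y + R y"
      unfolding R_def qeq .
  qed
  also have "\<dots> = (\<integral>y. pb y * indicator A y \<partial>LL n) + integral\<^sup>L (LL n) R"
    using ind iR by (rule Bochner_Integration.integral_add)
  also have "(\<integral>y. pb y * indicator A y \<partial>LL n) = (\<Sum>s\<in>S. measure (data_law n (\<lambda>_. 0) (V s)) A) / 2^m"
  proof -
    have b1: "(\<integral>y. pb y * indicator A y \<partial>LL n) = (\<integral>y. (\<Sum>s\<in>S. ps s y * indicator A y) / 2^m \<partial>LL n)"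
      unfolding pb_def by (intro Bochner_Integration.integral_cong refl) (simp add: sum_distrib_right)
    have b2: "(\<integral>y. (\<Sum>s\<in>S. ps s y * indicator A y) / 2^m \<partial>LL n) = (\<integral>y. (\<Sum>s\<in>S. ps s y * indicator A y) \<partial>LL n) / 2^m"
      by (rule integral_divide_zero)
    have b3: "(\<integral>y. (\<Sum>s\<in>S. ps s y * indicator A y) \<partial>LL n) = (\<Sum>s\<in>S. (\<integral>y. ps s y * indicator A y \<partial>LL n))"
      using ips by (intro Bochner_Integration.integral_sum integrable_real_mult_indicator[OF A]) blast
    have b4: "(\<Sum>s\<in>S. (\<integral>y. ps s y * indicator A y \<partial>LL n)) = (\<Sum>s\<in>S. measure (data_law n (\<lambda>_. 0) (V s)) A)"
    proof (intro sum.cong refl)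
      fix s assume s: "s \<in> S"
      show "(\<integral>y. ps s y * indicator A y \<partial>LL n) = measure (data_law n (\<lambda>_. 0) (V s)) A"
        unfolding ps_def by (rule measure_pd[symmetric]) (use Vpos[OF s] A in auto)
    qed
    show ?thesis unfolding b1 b2 b3 b4 ..
  qed
  finally show ?thesis using intR by (simp add: S_def V_def m_def)
qed



lemma zero_holder: "0 \<le> M \<Longrightarrow> (\<lambda>_. 0) \<in> holder_class \<alpha> M"
  unfolding holder_class_def
  by (rule CollectI, rule exI[where x="\<lambda>_ _. 0"]) (auto intro: DERIV_const)

lemma prob_test_le1: "prob_test n f V \<phi> b \<le> 1"
proof -
  interpret prob_space "data_law n f V" by (rule prob_data)
  show ?thesis unfolding prob_test_def by (rule prob_le_1)
qed

lemma bdd_pt: "bdd_above ((\<lambda>p. prob_test n (fst p) (snd p) \<phi> b) ` X)"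
  using prob_test_le1 by (intro bdd_aboveI) auto

lemma Valt_Sigma1:
  fixes n :: nat and c M :: real
  assumes n: "2 \<le> n" and M: "2 \<le> M" and c: "0 < c" "c < 1/2"
    and s: "s \<in> SS (n div 2)"
  defines "\<delta> \<equiv> 2 * c * real n powr (-1/4)"
  shows "Valt (n div 2) \<delta> s \<in> Sigma1 M n (c * real n powr (-1/4))"
proof -
  let ?m = "n div 2"
  let ?V = "Valt ?m \<delta> s"
  have t1: "1 \<le> real n powr (1/4)" using n by (intro ge_one_powr_ge_zero) auto
  have t: "0 < real n powr (-1/4)" "real n powr (-1/4) \<le> 1"
    using n t1 by (auto simp: powr_minus_divide)
  have d1: "2 * c * real n powr (-1/4) \<le> 1" using t c by (rule_tac mult_le_one) auto
  have d: "0 \<le> \<delta>" "\<delta> \<le> 1" using t c d1 by (auto simp: \<delta>_def)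
  have range: "?V i \<in> {0..M}" if "i \<in> {1..n}" for i
  proof -
    have "\<bar>esg ?m s i\<bar> \<le> 1" using esg_bound[OF s] that by auto
    then have "\<bar>\<delta> * esg ?m s i\<bar> \<le> 1" using d by (simp add: abs_mult mult_le_one)
    then show ?thesis using M by (auto simp: Valt_def abs_le_iff)
  qed
  have mean: "mean_V n ?V = 1"
    using n sum_esg[of n s] by (simp add: mean_V_def Valt_def sum.distrib sum_distrib_left[symmetric])
  have "(\<Sum>i=1..n. (?V i - mean_V n ?V)\<^sup>2) = \<delta>\<^sup>2 * (2 * real ?m)"
    unfolding mean using sum_esg2[OF s] by (simp add: Valt_def power_mult_distrib sum_distrib_left[symmetric])
  moreover have "real n / 2 \<le> 2 * real ?m" using n by linarith
  then have "\<delta>\<^sup>2 * (real n / 2) \<le> \<delta>\<^sup>2 * (2 * real ?m)" by (rule mult_left_mono) simp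
  then have "\<delta>\<^sup>2 / 2 \<le> \<delta>\<^sup>2 * (2 * real ?m) / real n"
    using n by (simp add: field_simps)
  ultimately have "\<delta>\<^sup>2 / 2 \<le> (\<Sum>i=1..n. (?V i - mean_V n ?V)\<^sup>2) / real n"
    by simp
  moreover have "(c * real n powr (-1/4))\<^sup>2 \<le> \<delta>\<^sup>2 / 2"
    unfolding \<delta>_def by (simp add: power_mult_distrib)
  ultimately have "(c * real n powr (-1/4))\<^sup>2 \<le> (\<Sum>i=1..n. (?V i - mean_V n ?V)\<^sup>2) / real n" by linarith
  then have "sqrt ((c * real n powr (-1/4))\<^sup>2) \<le> sqrt ((\<Sum>i=1..n. (?V i - mean_V n ?V)\<^sup>2) / real n)"
    by (rule real_sqrt_le_mono)
  then have "c * real n powr (-1/4) \<le> sqrt ((\<Sum>i=1..n. (?V i - mean_V n ?V)\<^sup>2) / real n)"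
    using c t by simp
  then show ?thesis using range by (simp add: Sigma1_def)
qed



lemma Kbound:
  fixes x :: real and m :: nat
  assumes x: "0 \<le> x" "x < 1" and y: "real m * x \<le> 1/2"
  shows "(1 / (1 - x)) ^ m \<le> 1 + 2 * (real m * x)"
proof -
  define y where "y = real m * x"
  have y0: "0 \<le> y" using x by (simp add: y_def)
  have b: "1 - y \<le> (1 - x) ^ m"
    using Bernoulli_inequality[of "-x" m] x by (simp add: y_def)
  have pos: "0 < 1 - y" using y by (simp add: y_def)
  have "(1 / (1 - x)) ^ m = 1 / (1 - x) ^ m" by (simp add: power_one_over)
  also have "\<dots> \<le> 1 / (1 - y)"
    using b pos by (intro divide_left_mono) auto
  also have "\<dots> \<le> 1 + 2 * y"
  proof -
    have yy: "y \<le> 1/2" using y by (simp add: y_def)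
    have "0 \<le> y * (1 - 2 * y)" using y0 yy by (intro mult_nonneg_nonneg) auto
    moreover have "(1 + 2 * y) * (1 - y) = 1 + y * (1 - 2 * y)" by (simp add: algebra_simps)
    ultimately have "1 \<le> (1 + 2 * y) * (1 - y)" by linarith
    then show ?thesis using pos by (simp add: field_simps)
  qed
  finally show ?thesis by (simp add: y_def)
qed

lemma delta_facts:
  fixes n :: nat and c \<eta> :: real
  assumes n: "2 \<le> n" and c: "0 < c" "c < 1/2" "c < sqrt \<eta> / 2" and e: "0 < \<eta>"
  defines "\<delta> \<equiv> 2 * c * real n powr (-1/4)"
  shows "0 \<le> \<delta>" "\<delta> < 1" "(1 / (1 - \<delta>^4)) ^ (n div 2) \<le> 1 + \<eta>\<^sup>2"
proof -
  have t1: "1 \<le> real n powr (1/4)" using n by (intro ge_one_powr_ge_zero) auto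
  have t: "0 < real n powr (-1/4)" "real n powr (-1/4) \<le> 1"
    using n t1 by (auto simp: powr_minus_divide)
  show "0 \<le> \<delta>" using t c by (simp add: \<delta>_def)
  have "2 * c < 1" using c by simp
  moreover have "2 * c * real n powr (-1/4) \<le> 2 * c * 1"
    using t c by (intro mult_left_mono) auto
  ultimately have "2 * c * real n powr (-1/4) < 1" by linarith
  then show "\<delta> < 1" by (simp add: \<delta>_def)
  have t4: "(real n powr (-1/4)) ^ 4 = 1 / real n"
  proof -
    have "(real n powr (-1/4)) ^ 4 = real n powr (of_nat 4 * (-1/4))"
      using n by (intro powr_power) auto
    also have "\<dots> = real n powr (-1)" by simp
    also have "\<dots> = 1 / real n" using n by (simp add: powr_minus_divide)
    finally show ?thesis .
  qed
  have d4: "\<delta>^4 = 16 * c^4 / real n"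
    unfolding \<delta>_def power_mult_distrib t4 by simp
  have c4: "c^4 < (sqrt \<eta> / 2)^4" using c by (intro power_strict_mono) auto
  have s4: "(sqrt \<eta> / 2)^4 = \<eta>\<^sup>2 / 16"
  proof -
    have "(sqrt \<eta>)^4 = ((sqrt \<eta>)\<^sup>2)\<^sup>2" by (simp flip: power_mult)
    then have "(sqrt \<eta>)^4 = \<eta>\<^sup>2" using e by simp
    then show ?thesis by (simp add: power_divide)
  qed
  have c4': "c^4 < 1/16"
  proof -
    have "c^4 < (1/2)^4" using c by (intro power_strict_mono) auto
    moreover have "(1/2::real)^4 = 1/16" by (simp add: power_divide)
    ultimately show ?thesis by linarith
  qed
  have c4pos: "0 \<le> c^4" using c by simp
  define x where "x = \<delta>^4"
  have x0: "0 \<le> x" using c4pos n by (simp add: x_def d4)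
  have x1: "x < 1"
  proof -
    have "16 * c^4 < 1" using c4' by simp
    then have "16 * c^4 / real n < 1" using n by (simp add: field_simps)
    then show ?thesis by (simp add: x_def d4)
  qed
  have mx: "real (n div 2) * x \<le> 8 * c^4"
  proof -
    have "real (n div 2) \<le> real n / 2" by linarith
    then have "real (n div 2) * x \<le> real n / 2 * x" using x0 by (rule mult_right_mono)
    also have "real n / 2 * x = 8 * c^4" using n by (simp add: x_def d4 field_simps)
    finally show ?thesis .
  qed
  have "(1 / (1 - x)) ^ (n div 2) \<le> 1 + 2 * (real (n div 2) * x)"
    using x0 x1 mx c4' by (intro Kbound) auto
  also have "\<dots> \<le> 1 + \<eta>\<^sup>2" using mx c4 s4 by simp
  finally show "(1 / (1 - \<delta>^4)) ^ (n div 2) \<le> 1 + \<eta>\<^sup>2" by (simp add: x_def)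
qed



theorem theorem4p7:
  fixes \<alpha> :: real
  assumes "\<alpha> > 0"
  shows "\<exists>M0. \<forall>M \<ge> M0. \<forall>\<eta>::real. 0 < \<eta> \<and> \<eta> < 1 \<longrightarrow>
     (\<exists>c\<eta> > 0. \<exists>N::nat. \<forall>c::real. \<forall>n::nat. 0 < c \<and> c < c\<eta> \<and> n \<ge> N \<longrightarrow>
        (\<forall>\<phi>. is_test n \<phi> \<longrightarrow>
           (SUP p \<in> holder_class \<alpha> M \<times> Sigma0 M n. prob_test n (fst p) (snd p) \<phi> 1)
         + (SUP p \<in> holder_class \<alpha> M \<times> Sigma1 M n (c * real n powr (-1/4)).
              prob_test n (fst p) (snd p) \<phi> 0)
         \<ge> 1 - \<eta>))"
proof (rule exI[of _ 2], intro allI impI)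
  fix M :: real and \<eta> :: real
  assume M: "2 \<le> M" and e: "0 < \<eta> \<and> \<eta> < 1"
  define ce where "ce = min (1/2) (sqrt \<eta> / 2)"
  have ce: "0 < ce" using e by (simp add: ce_def)
  show "\<exists>c\<eta> > 0. \<exists>N::nat. \<forall>c::real. \<forall>n::nat. 0 < c \<and> c < c\<eta> \<and> n \<ge> N \<longrightarrow>
        (\<forall>\<phi>. is_test n \<phi> \<longrightarrow>
           (SUP p \<in> holder_class \<alpha> M \<times> Sigma0 M n. prob_test n (fst p) (snd p) \<phi> 1)
         + (SUP p \<in> holder_class \<alpha> M \<times> Sigma1 M n (c * real n powr (-1/4)).
              prob_test n (fst p) (snd p) \<phi> 0)
         \<ge> 1 - \<eta>)"
  proof (rule exI[of _ ce], rule conjI[OF ce], rule exI[of _ "2::nat"], intro allI impI)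
    fix c :: real and n :: nat and \<phi>
    assume h: "0 < c \<and> c < ce \<and> 2 \<le> n" and test: "is_test n \<phi>"
    have c: "0 < c" "c < 1/2" "c < sqrt \<eta> / 2" and n: "2 \<le> n" using h by (auto simp: ce_def)
    define m where "m = n div 2"
    define \<delta> where "\<delta> = 2 * c * real n powr (-1/4)"
    have e0: "0 < \<eta>" using e by simp
    note df = delta_facts[OF n c e0, folded \<delta>_def m_def]
    have phim[measurable]: "\<phi> \<in> borel_measurable (LL n)" using test by (simp add: is_test_def)
    have phi01: "\<phi> y = 0 \<or> \<phi> y = 1" for y using test by (auto simp: is_test_def)
    define A where "A = {y \<in> space (LL n). \<phi> y = 0}"
    have A: "A \<in> sets (LL n)" unfolding A_def by measurable
    have core': "measure (data_law n (\<lambda>_. 0) (\<lambda>_. 1)) A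
       \<le> (\<Sum>s\<in>SS m. measure (data_law n (\<lambda>_. 0) (Valt m \<delta> s)) A) / 2 ^ m + \<eta>"
      unfolding m_def using core[OF df(1,2) e0 df(3)[unfolded m_def] A] .
    let ?S1 = "SUP p \<in> holder_class \<alpha> M \<times> Sigma0 M n. prob_test n (fst p) (snd p) \<phi> 1"
    let ?S2 = "SUP p \<in> holder_class \<alpha> M \<times> Sigma1 M n (c * real n powr (-1/4)). prob_test n (fst p) (snd p) \<phi> 0"
    have pt0: "prob_test n f V \<phi> 0 = measure (data_law n f V) A" for f V
      unfolding prob_test_def A_def space_data ..
    have pt1: "prob_test n (\<lambda>_. 0) (\<lambda>_. 1) \<phi> 1 = 1 - measure (data_law n (\<lambda>_. 0) (\<lambda>_. 1)) A"
    proof -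
      interpret P: prob_space "data_law n (\<lambda>_. 0) (\<lambda>_. 1)" by (rule prob_data)
      have "{y \<in> space (data_law n (\<lambda>_. 0) (\<lambda>_. 1)). \<phi> y = 1} = space (data_law n (\<lambda>_. 0) (\<lambda>_. 1)) - A"
        using phi01 by (auto simp: A_def space_data)
      moreover have "A \<in> P.events" using A by (simp add: sets_data)
      ultimately show ?thesis unfolding prob_test_def by (simp add: P.prob_compl)
    qed
    have hol: "(\<lambda>_. 0) \<in> holder_class \<alpha> M" using M by (intro zero_holder) simp
    have s0: "(\<lambda>_. 1) \<in> Sigma0 M n" using M by (auto simp: Sigma0_def)
    have S1: "prob_test n (\<lambda>_. 0) (\<lambda>_. 1) \<phi> 1 \<le> ?S1"
    proof -
      have "((\<lambda>_. 0), (\<lambda>_. 1)) \<in> holder_class \<alpha> M \<times> Sigma0 M n" using hol s0 by simp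
      then have "(\<lambda>p. prob_test n (fst p) (snd p) \<phi> 1) ((\<lambda>_. 0), (\<lambda>_. 1)) \<le> ?S1"
        by (rule cSUP_upper[OF _ bdd_pt])
      then show ?thesis by simp
    qed
    have S2: "measure (data_law n (\<lambda>_. 0) (Valt m \<delta> s)) A \<le> ?S2" if s: "s \<in> SS m" for s
    proof -
      have "Valt m \<delta> s \<in> Sigma1 M n (c * real n powr (-1/4))"
        unfolding m_def \<delta>_def using n M c s by (intro Valt_Sigma1) (auto simp: m_def)
      then have "((\<lambda>_. 0), Valt m \<delta> s) \<in> holder_class \<alpha> M \<times> Sigma1 M n (c * real n powr (-1/4))"
        using hol by simp
      then have "(\<lambda>p. prob_test n (fst p) (snd p) \<phi> 0) ((\<lambda>_. 0), Valt m \<delta> s) \<le> ?S2"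
        by (rule cSUP_upper[OF _ bdd_pt])
      then have "prob_test n (\<lambda>_. 0) (Valt m \<delta> s) \<phi> 0 \<le> ?S2" by simp
      then show ?thesis by (simp only: pt0)
    qed
    have "(\<Sum>s\<in>SS m. measure (data_law n (\<lambda>_. 0) (Valt m \<delta> s)) A) \<le> of_nat (card (SS m)) * ?S2"
      using S2 by (rule sum_bounded_above)
    then have avg: "(\<Sum>s\<in>SS m. measure (data_law n (\<lambda>_. 0) (Valt m \<delta> s)) A) / 2 ^ m \<le> ?S2"
      by (simp add: card_SS field_simps)
    show "1 - \<eta> \<le> ?S1 + ?S2"
      using core' avg S1 pt1 by linarith
  qed
qed


end
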